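(* Let $G$ be a graph with graph Laplacian $\mathbf{L}$ and normalized graph Laplacian $\tilde{\mathbf{L}}$. If for a node-level positional encoding $\mathbf{Q}\in\mathbb{R}^{n\times d'}$ with compact domain there exist matrices $\mathbf{W}^Q,\mathbf{W}^K$ such that $$\frac{1}{\sqrt{d_k}}(\mathbf{Q}\mathbf{W}^Q)(\mathbf{Q}\mathbf{W}^K)^T=\tilde{\mathbf{L}},$$ then there exists a parameterization of the structural embeddings $\mathbf{P}$ with $\mathbf{Q}$ as node-level positional encoding such that $\mathbf{P}$ is sufficiently node- and adjacency-identifying.
   Context: Graphs are finite, undirected, without self-loops and without isolated nodes, with $n$ nodes, adjacency matrix $\mathbf{A}(G)$, degree matrix $\mathbf{D}$; $\mathbf{L}=\mathbf{D}-\mathbf{A}(G)$, $\tilde{\mathbf{L}}=\mathbf{I}-\mathbf{D}^{-1/2}\mathbf{A}(G)\mathbf{D}^{-1/2}$; $d_k>0$ is fixed. Structural embeddings with node-level positional encoding $\mathbf{Q}$: $\mathbf{P}(v)=\mathsf{FFN}(\mathrm{emb}_{\deg}(v)+\mathbf{Q}(v))$, where $\mathrm{emb}_{\deg}$ is a learnable embedding of the degree of $v$ and $\mathsf{FFN}$ an MLP (both parametrized; the embedding dimension is also a parameter). With $\tilde{\mathbf{P}}=\frac{1}{\sqrt{d_k}}\mathbf{P}\mathbf{W}^Q(\mathbf{P}\mathbf{W}^K)^T$: $\mathbf{P}$ is node-identifying if for some $\mathbf{W}^Q,\mathbf{W}^K$: $\tilde{\mathbf{P}}_{ij}=\max_k\tilde{\mathbf{P}}_{ik}\iff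 i=j$; adjacency-identifying if for some $\mathbf{W}^Q,\mathbf{W}^K$: $\tilde{\mathbf{P}}_{ij}=\max_k\tilde{\mathbf{P}}_{ik}\iff\mathbf{A}(G)_{ij}=1$. Parametrized structural embeddings are sufficiently node-identifying (resp. adjacency-identifying) if there is a node-identifying (resp. adjacency-identifying) matrix $\mathbf{P}^*$ such that for every $\varepsilon>0$ some parameter choice yields embeddings within Frobenius distance $\varepsilon$ of $\mathbf{P}^*$. *)

theory Defs
  imports Complex_Main
begin

text \<open>Matrices are rendered as functions nat => nat => real with explicit
  dimensions; an n x m matrix M only matters on entries i < n, j < m.
  Nodes of a graph with n nodes are 0..n-1.\<close>

definition is_graph :: "nat \<Rightarrow> (nat \<Rightarrow> nat \<Rightarrow> real) \<Rightarrow> bool" where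
  "is_graph n A \<longleftrightarrow>
     (\<forall>i<n. \<forall>j<n. A i j = 0 \<or> A i j = 1) \<and>
     (\<forall>i<n. \<forall>j<n. A i j = A j i) \<and>
     (\<forall>i<n. A i i = 0) \<and>
     (\<forall>i<n. \<exists>j<n. A i j = 1)"

definition degree :: "nat \<Rightarrow> (nat \<Rightarrow> nat \<Rightarrow> real) \<Rightarrow> nat \<Rightarrow> nat" where
  "degree n A v = card {u. u < n \<and> A v u = 1}"

definition laplacian :: "nat \<Rightarrow> (nat \<Rightarrow> nat \<Rightarrow> real) \<Rightarrow> nat \<Rightarrow> nat \<Rightarrow> real" where
  "laplacian n A i j = (if i = j then real (degree n A i) else 0) - A i j"

definition norm_laplacian :: "nat \<Rightarrow> (nat \<Rightarrow> nat \<Rightarrow> real) \<Rightarrow> nat \<Rightarrow> nat \<Rightarrow> real" where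
  "norm_laplacian n A i j =
     (if i = j then 1 else 0) - A i j / (sqrt (real (degree n A i)) * sqrt (real (degree n A j)))"

definition att_scores ::
  "nat \<Rightarrow> nat \<Rightarrow> (nat \<Rightarrow> nat \<Rightarrow> real) \<Rightarrow> (nat \<Rightarrow> nat \<Rightarrow> real) \<Rightarrow> (nat \<Rightarrow> nat \<Rightarrow> real)
     \<Rightarrow> nat \<Rightarrow> nat \<Rightarrow> real" where
  "att_scores d dk P WQ WK i j =
     (1 / sqrt (real dk)) * (\<Sum>t<dk. (\<Sum>a<d. P i a * WQ a t) * (\<Sum>b<d. P j b * WK b t))"

definition node_identifying :: "nat \<Rightarrow> nat \<Rightarrow> nat \<Rightarrow> (nat \<Rightarrow> nat \<Rightarrow> real) \<Rightarrow> bool" where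
  "node_identifying n d dk P \<longleftrightarrow>
     (\<exists>WQ WK. \<forall>i<n. \<forall>j<n.
        att_scores d dk P WQ WK i j = Max {att_scores d dk P WQ WK i k | k. k < n} \<longleftrightarrow> i = j)"

definition adjacency_identifying ::
  "nat \<Rightarrow> nat \<Rightarrow> nat \<Rightarrow> (nat \<Rightarrow> nat \<Rightarrow> real) \<Rightarrow> (nat \<Rightarrow> nat \<Rightarrow> real) \<Rightarrow> bool" where
  "adjacency_identifying n d dk A P \<longleftrightarrow>
     (\<exists>WQ WK. \<forall>i<n. \<forall>j<n.
        att_scores d dk P WQ WK i j = Max {att_scores d dk P WQ WK i k | k. k < n} \<longleftrightarrow> A i j = 1)"

definition frob_dist :: "nat \<Rightarrow> nat \<Rightarrow> (nat \<Rightarrow> nat \<Rightarrow> real) \<Rightarrow> (nat \<Rightarrow> nat \<Rightarrow> real) \<Rightarrow> real" where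
  "frob_dist n d P P' = sqrt (\<Sum>i<n. \<Sum>j<d. (P i j - P' i j)\<^sup>2)"

text \<open>MLP (feed-forward network) with ReLU activations between layers.
  ds = [d0, d1, ..., dL] are the layer widths, layers = [(W1,b1),...,(WL,bL)],
  W_l of size d_l x d_(l-1), b_l of size d_l.\<close>
definition affine :: "nat \<Rightarrow> nat \<Rightarrow> (nat \<Rightarrow> nat \<Rightarrow> real) \<Rightarrow> (nat \<Rightarrow> real) \<Rightarrow> (nat \<Rightarrow> real) \<Rightarrow> nat \<Rightarrow> real" where
  "affine m k W b x = (\<lambda>i. if i < k then (\<Sum>j<m. W i j * x j) + b i else 0)"

fun mlp :: "nat list \<Rightarrow> ((nat \<Rightarrow> nat \<Rightarrow> real) \<times> (nat \<Rightarrow> real)) list \<Rightarrow> (nat \<Rightarrow> real) \<Rightarrow> nat \<Rightarrow> real" where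
  "mlp (m # k # ds) ((W, b) # L) x =
     (let y = affine m k W b x in if L = [] then y else mlp (k # ds) L (\<lambda>i. max 0 (y i)))"
| "mlp _ _ x = x"

definition valid_mlp :: "nat \<Rightarrow> nat \<Rightarrow> nat list \<Rightarrow> ((nat \<Rightarrow> nat \<Rightarrow> real) \<times> (nat \<Rightarrow> real)) list \<Rightarrow> bool" where
  "valid_mlp din dout ds L \<longleftrightarrow> L \<noteq> [] \<and> length ds = length L + 1 \<and> hd ds = din \<and> last ds = dout"

definition struct_emb ::
  "nat \<Rightarrow> nat \<Rightarrow> (nat \<Rightarrow> nat \<Rightarrow> real) \<Rightarrow> (nat \<Rightarrow> nat \<Rightarrow> real) \<Rightarrow> (nat \<Rightarrow> nat \<Rightarrow> real)
     \<Rightarrow> nat list \<Rightarrow> ((nat \<Rightarrow> nat \<Rightarrow> real) \<times> (nat \<Rightarrow> real)) list \<Rightarrow> nat \<Rightarrow> nat \<Rightarrow> real" where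
  "struct_emb n d' A Q emb ds L = (\<lambda>v. mlp ds L (\<lambda>j. emb (degree n A v) j + Q v j))"

definition suff_node_identifying ::
  "nat \<Rightarrow> nat \<Rightarrow> nat \<Rightarrow> (nat \<Rightarrow> nat \<Rightarrow> real) \<Rightarrow> (nat \<Rightarrow> nat \<Rightarrow> real) \<Rightarrow> bool" where
  "suff_node_identifying n d' dk A Q \<longleftrightarrow>
     (\<exists>d Pstar. node_identifying n d dk Pstar \<and>
        (\<forall>\<epsilon>>0. \<exists>emb ds L. valid_mlp d' d ds L \<and>
            frob_dist n d (struct_emb n d' A Q emb ds L) Pstar < \<epsilon>))"

definition suff_adjacency_identifying ::
  "nat \<Rightarrow> nat \<Rightarrow> nat \<Rightarrow> (nat \<Rightarrow> nat \<Rightarrow> real) \<Rightarrow> (nat \<Rightarrow> nat \<Rightarrow> real) \<Rightarrow> bool" where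
  "suff_adjacency_identifying n d' dk A Q \<longleftrightarrow>
     (\<exists>d Pstar. adjacency_identifying n d dk A Pstar \<and>
        (\<forall>\<epsilon>>0. \<exists>emb ds L. valid_mlp d' d ds L \<and>
            frob_dist n d (struct_emb n d' A Q emb ds L) Pstar < \<epsilon>))"

end

theory Submission
  imports Defs
begin

lemma deg_pos:
  assumes "is_graph n A" "i < n"
  shows "degree n A i > 0"
proof -
  obtain j where "j < n" "A i j = 1" using assms unfolding is_graph_def by blast
  hence "j \<in> {u. u < n \<and> A i u = 1}" by simp
  moreover have "finite {u. u < n \<and> A i u = 1}" by simp
  ultimately show ?thesis unfolding degree_def by (metis card_gt_0_iff empty_iff)
qed

lemma scaled_scores:
  fixes s :: "nat \<Rightarrow> real"
  shows "att_scores d dk (\<lambda>v a. s v * Q v a) WQ WK i j = s i * s j * att_scores d dk Q WQ WK i j"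
proof -
  have e: "(\<Sum>a<d. s v * Q v a * W a t) = s v * (\<Sum>a<d. Q v a * W a t)" for v W t
    by (simp add: sum_distrib_left mult.assoc)
  show ?thesis unfolding att_scores_def e
    by (simp add: sum_distrib_left mult_ac)
qed

lemma neg_scores:
  "att_scores d dk Q (\<lambda>a t. - WQ a t) WK i j = - att_scores d dk Q WQ WK i j"
  unfolding att_scores_def by (simp add: sum_negf)

lemma scaled_lap:
  assumes "is_graph n A" "i < n" "j < n"
  shows "sqrt (real (degree n A i)) * sqrt (real (degree n A j)) * norm_laplacian n A i j
         = (if i = j then real (degree n A i) else 0) - A i j"
proof -
  have di: "degree n A i > 0" and dj: "degree n A j > 0" using deg_pos assms by auto
  have aii: "A i i = 0" using assms unfolding is_graph_def by auto
  show ?thesis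
  proof (cases "i = j")
    case True
    then show ?thesis using aii unfolding norm_laplacian_def by simp
  next
    case False
    have "sqrt (real (degree n A i)) * sqrt (real (degree n A j)) > 0" using di dj by simp
    then show ?thesis using False di dj unfolding norm_laplacian_def by (simp add: field_simps)
  qed
qed

theorem lemmaF13:
  fixes n d' dk :: nat and A Q :: "nat \<Rightarrow> nat \<Rightarrow> real"
  assumes "is_graph n A"
    and "dk > 0"
    and "\<exists>WQ WK. \<forall>i<n. \<forall>j<n. att_scores d' dk Q WQ WK i j = norm_laplacian n A i j"
  shows "suff_node_identifying n d' dk A Q \<and> suff_adjacency_identifying n d' dk A Q"
proof -
  obtain WQ WK where H: "\<And>i j. i < n \<Longrightarrow> j < n \<Longrightarrow> att_scores d' dk Q WQ WK i j = norm_laplacian n A i j"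
    using assms(3) by blast
  define s where "s v = sqrt (real (degree n A v))" for v
  define W1 where "W1 j a = (1 / sqrt (real dk)) * (\<Sum>t<dk. WQ a t * (\<Sum>b<d'. Q j b * WK b t))" for j a
  define W2 where "W2 i j = s j * Q j i" for i j
  define ds where "ds = [d', n, d']"
  define L where "L = [(W1, \<lambda>_::nat. 0::real), (W2, \<lambda>_::nat. 0::real)]"
  define emb where "emb = (\<lambda>(_::nat) (_::nat). 0::real)"
  define P where "P = struct_emb n d' A Q emb ds L"
  have valid: "valid_mlp d' d' ds L" unfolding valid_mlp_def ds_def L_def by simp
  have lin: "(\<Sum>a<d'. W1 j a * Q v a) = att_scores d' dk Q WQ WK v j" for j v
    unfolding W1_def att_scores_def
    by (simp add: sum_distrib_left sum_distrib_right mult_ac sum.swap[of _ "{..<dk}"])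
  have onehot: "max 0 (att_scores d' dk Q WQ WK v j) = (if v = j then 1 else 0)"
    if "v < n" "j < n" for v j
  proof -
    have "att_scores d' dk Q WQ WK v j = (if v = j then 1 else 0) - A v j / (s v * s j)"
      using H[OF that] unfolding norm_laplacian_def s_def by simp
    moreover have "A v j / (s v * s j) \<ge> 0"
      using assms(1) that deg_pos[OF assms(1)] unfolding is_graph_def s_def
      by (metis div_0 order_refl zero_le_divide_iff zero_le_one mult_nonneg_nonneg real_sqrt_ge_zero of_nat_0_le_iff)
    moreover have "A v v = 0" using assms(1) that unfolding is_graph_def by auto
    ultimately show ?thesis by auto
  qed
  have Pval: "P v a = s v * Q v a" if "v < n" "a < d'" for v a
  proof -
    have "P v a = (\<Sum>j<n. W2 a j * max 0 (\<Sum>b<d'. W1 j b * Q v b))"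
      unfolding P_def struct_emb_def ds_def L_def emb_def using that
      by (simp add: affine_def Let_def)
    also have "\<dots> = (\<Sum>j<n. W2 a j * (if v = j then 1 else 0))"
      by (rule sum.cong) (simp_all add: lin onehot that)
    also have "\<dots> = W2 a v" using that by (simp add: sum.delta' if_distrib cong: if_cong)
    finally show ?thesis unfolding W2_def by simp
  qed
  have scoresP: "att_scores d' dk P WQ' WK' i j = att_scores d' dk (\<lambda>v a. s v * Q v a) WQ' WK' i j"
    if "i < n" "j < n" for WQ' WK' i j
    unfolding att_scores_def using that Pval by simp
  have S1: "att_scores d' dk P WQ WK i j = (if i = j then real (degree n A i) else 0) - A i j"
    if "i < n" "j < n" for i j
    using scoresP[OF that] scaled_scores H[OF that] scaled_lap[OF assms(1) that] s_def by simp
  have S2: "att_scores d' dk P (\<lambda>a t. - WQ a t) WK i j = A i j - (if i = j then real (degree n A i) else 0)"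
    if "i < n" "j < n" for i j
    using scoresP[OF that] scaled_scores neg_scores[of d' dk Q WQ WK i j] H[OF that]
      scaled_lap[OF assms(1) that] s_def by simp
  have dist0: "frob_dist n d' (struct_emb n d' A Q emb ds L) P = 0"
    unfolding frob_dist_def P_def by simp
  have ni: "node_identifying n d' dk P"
    unfolding node_identifying_def
  proof (intro exI allI impI)
    fix i j assume ij: "i < n" "j < n"
    let ?S = "att_scores d' dk P WQ WK"
    have Sii: "?S i i = real (degree n A i)" using S1[OF ij(1) ij(1)] assms(1) ij
      unfolding is_graph_def by auto
    have dpos: "degree n A i > 0" using deg_pos assms(1) ij by auto
    have lt: "?S i k < ?S i i" if "k < n" "k \<noteq> i" for k
    proof -
      have "A i k = 0 \<or> A i k = 1" using assms(1) ij that unfolding is_graph_def by auto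
      then show ?thesis using S1[OF ij(1) that(1)] that Sii dpos by auto
    qed
    have M: "Max {?S i k | k. k < n} = ?S i i"
      by (rule Max_eqI) (use ij lt in \<open>auto intro: less_imp_le\<close>)
    show "(?S i j = Max {?S i k | k. k < n}) = (i = j)"
      unfolding M using lt[OF ij(2)] by force
  qed
  have ai: "adjacency_identifying n d' dk A P"
    unfolding adjacency_identifying_def
  proof (intro exI allI impI)
    fix i j assume ij: "i < n" "j < n"
    let ?S = "att_scores d' dk P (\<lambda>a t. - WQ a t) WK"
    obtain j0 where j0: "j0 < n" "A i j0 = 1" using assms(1) ij unfolding is_graph_def by blast
    have aii: "A i i = 0" using assms(1) ij unfolding is_graph_def by auto
    have dpos: "degree n A i > 0" using deg_pos assms(1) ij by auto
    have val: "?S i k = (if A i k = 1 then 1 else if k = i then - real (degree n A i) else 0)"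
      if "k < n" for k
    proof -
      have "A i k = 0 \<or> A i k = 1" using assms(1) ij that unfolding is_graph_def by auto
      then show ?thesis using S2[OF ij(1) that] aii by auto
    qed
    have s0: "?S i j0 = 1" using val[OF j0(1)] j0 by simp
    have M: "Max {?S i k | k. k < n} = 1"
    proof (rule Max_eqI)
      show "finite {?S i k | k. k < n}" by simp
      show "1 \<in> {?S i k | k. k < n}" using s0 j0(1) by (metis (mono_tags, lifting) mem_Collect_eq)
      fix y assume "y \<in> {?S i k | k. k < n}"
      then obtain k where "k < n" "y = ?S i k" by blast
      then show "y \<le> 1" using val dpos by auto
    qed
    show "(?S i j = Max {?S i k | k. k < n}) = (A i j = 1)"
      unfolding M using val[OF ij(2)] dpos by auto
  qed
  show ?thesis
    unfolding suff_node_identifying_def suff_adjacency_identifying_def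
    using ni ai valid dist0 by (metis)
qed

end
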